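(* Let $n\ge2$ and let $e\in\mathcal{I}^{\ast}_n$ be an idempotent of rank $n-1$ (that is, $e$ has one block $\{x,y,x',y'\}$ with $x\ne y$ and blocks $\{t,t'\}$ for all $t\ne x,y$). Then the maximal subgroup $G(e)$ of $\mathcal{I}^{\ast}_n$ with identity $e$ is an isolated subsemigroup of $\mathcal{I}^{\ast}_n$.
   Context: Let $X=\{1,\dots,n\}$, $X'=\{1',\dots,n'\}$. $\mathcal{I}^{\ast}_n$ is the set of partitions of $X\cup X'$ all of whose blocks meet both $X$ and $X'$, with product: regard $\alpha$ as a partition of $X\cup X''$ and $\beta$ as a partition of $X''\cup X'$ ($X''$ a third copy of $X$), and let $\alpha\beta$ be the partition of $X\cup X'$ induced by the equivalence on $X\cup X''\cup X'$ generated by the blocks of both. Rank = number of blocks. $G(e)$ is the $\mathcal{H}$-class of $e$. A subsemigroup $T$ of a semigroup $S$ is isolated if for all $a\in S$ and $k\ge1$, $a^k\in T$ implies $a\in T$. *)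

theory Defs
  imports Main
begin

(* Points of X \<union> X': Inl i is i \<in> X, Inr i is i' \<in> X', for i \<in> {1..n}. *)
definition pts :: "nat \<Rightarrow> (nat + nat) set" where
  "pts n = Inl ` {1..n} \<union> Inr ` {1..n}"

(* A partition of X \<union> X' is represented by its equivalence relation.
   I*_n: partitions all of whose blocks meet both X and X'. *)
definition Istar :: "nat \<Rightarrow> ((nat + nat) \<times> (nat + nat)) set set" where
  "Istar n = {r. equiv (pts n) r \<and>
      (\<forall>a \<in> pts n. (\<exists>i\<in>{1..n}. (a, Inl i) \<in> r) \<and> (\<exists>j\<in>{1..n}. (a, Inr j) \<in> r))}"

(* Three copies: (0,i) = i \<in> X, (1,i) = i'' \<in> X'', (2,i) = i' \<in> X'. *)
fun embL :: "nat + nat \<Rightarrow> nat \<times> nat" where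
  "embL (Inl i) = (0, i)" | "embL (Inr i) = (1, i)"

fun embR :: "nat + nat \<Rightarrow> nat \<times> nat" where
  "embR (Inl i) = (1, i)" | "embR (Inr i) = (2, i)"

fun embO :: "nat + nat \<Rightarrow> nat \<times> nat" where
  "embO (Inl i) = (0, i)" | "embO (Inr i) = (2, i)"

(* Product: alpha on X \<union> X'', beta on X'' \<union> X', join the generated equivalence,
   and restrict to X \<union> X'. *)
definition pmult :: "nat \<Rightarrow> ((nat + nat) \<times> (nat + nat)) set
    \<Rightarrow> ((nat + nat) \<times> (nat + nat)) set \<Rightarrow> ((nat + nat) \<times> (nat + nat)) set" where
  "pmult n \<alpha> \<beta> = {(a, b). a \<in> pts n \<and> b \<in> pts n \<and>
      (embO a, embO b) \<in> ((\<lambda>(x, y). (embL x, embL y)) ` \<alpha> \<union>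
                          (\<lambda>(x, y). (embR x, embR y)) ` \<beta>)\<^sup>*}"

definition prank :: "nat \<Rightarrow> ((nat + nat) \<times> (nat + nat)) set \<Rightarrow> nat" where
  "prank n r = card (pts n // r)"

definition in_right_S1 :: "'a set \<Rightarrow> ('a \<Rightarrow> 'a \<Rightarrow> 'a) \<Rightarrow> 'a \<Rightarrow> 'a \<Rightarrow> bool" where
  "in_right_S1 S m a b \<longleftrightarrow> a = b \<or> (\<exists>s\<in>S. a = m b s)"

definition in_left_S1 :: "'a set \<Rightarrow> ('a \<Rightarrow> 'a \<Rightarrow> 'a) \<Rightarrow> 'a \<Rightarrow> 'a \<Rightarrow> bool" where
  "in_left_S1 S m a b \<longleftrightarrow> a = b \<or> (\<exists>s\<in>S. a = m s b)"

definition Hclass :: "'a set \<Rightarrow> ('a \<Rightarrow> 'a \<Rightarrow> 'a) \<Rightarrow> 'a \<Rightarrow> 'a set" where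
  "Hclass S m e = {a \<in> S. in_right_S1 S m a e \<and> in_right_S1 S m e a \<and>
                           in_left_S1 S m a e \<and> in_left_S1 S m e a}"

fun spow :: "('a \<Rightarrow> 'a \<Rightarrow> 'a) \<Rightarrow> 'a \<Rightarrow> nat \<Rightarrow> 'a" where
  "spow m a 0 = undefined"
| "spow m a (Suc 0) = a"
| "spow m a (Suc (Suc k)) = m (spow m a (Suc k)) a"

definition subsemigroup :: "'a set \<Rightarrow> ('a \<Rightarrow> 'a \<Rightarrow> 'a) \<Rightarrow> 'a set \<Rightarrow> bool" where
  "subsemigroup S m T \<longleftrightarrow> T \<subseteq> S \<and> (\<forall>a\<in>T. \<forall>b\<in>T. m a b \<in> T)"

definition isolated :: "'a set \<Rightarrow> ('a \<Rightarrow> 'a \<Rightarrow> 'a) \<Rightarrow> 'a set \<Rightarrow> bool" where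
  "isolated S m T \<longleftrightarrow> (\<forall>a\<in>S. \<forall>k\<ge>1. spow m a k \<in> T \<longrightarrow> a \<in> T)"

end

theory Submission imports Defs begin

type_synonym prel = "((nat + nat) \<times> (nat + nat)) set"

definition Kr :: "prel \<Rightarrow> nat rel" where "Kr r = {(i,j). (Inl i, Inl j) \<in> r}"
definition Cr :: "prel \<Rightarrow> nat rel" where "Cr r = {(i,j). (Inr i, Inr j) \<in> r}"
definition Xr :: "prel \<Rightarrow> nat rel" where "Xr r = {(i,j). (Inl i, Inr j) \<in> r}"

lemma pts_simps[simp]: "Inl i \<in> pts n \<longleftrightarrow> i \<in> {1..n}" "Inr i \<in> pts n \<longleftrightarrow> i \<in> {1..n}"
  by (auto simp: pts_def)

lemma Istar_equiv: "r \<in> Istar n \<Longrightarrow> equiv (pts n) r"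
  by (simp add: Istar_def)

lemma Istar_sub: "r \<in> Istar n \<Longrightarrow> (p,q) \<in> r \<Longrightarrow> p \<in> pts n \<and> q \<in> pts n"
  using Istar_equiv[of r n] unfolding equiv_def by blast

lemma Istar_refl: "r \<in> Istar n \<Longrightarrow> p \<in> pts n \<Longrightarrow> (p,p) \<in> r"
  using Istar_equiv[of r n] unfolding equiv_def refl_on_def by blast

lemma Istar_sym: "r \<in> Istar n \<Longrightarrow> (p,q) \<in> r \<Longrightarrow> (q,p) \<in> r"
  using Istar_equiv[of r n] unfolding equiv_def sym_def by blast

lemma Istar_trans: "r \<in> Istar n \<Longrightarrow> (p,q) \<in> r \<Longrightarrow> (q,s) \<in> r \<Longrightarrow> (p,s) \<in> r"
  using Istar_equiv[of r n] unfolding equiv_def trans_def by blast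

lemma Istar_L: "r \<in> Istar n \<Longrightarrow> p \<in> pts n \<Longrightarrow> \<exists>i\<in>{1..n}. (p, Inl i) \<in> r"
  by (simp add: Istar_def)

lemma Istar_R: "r \<in> Istar n \<Longrightarrow> p \<in> pts n \<Longrightarrow> \<exists>i\<in>{1..n}. (p, Inr i) \<in> r"
  by (simp add: Istar_def)

lemma rep_eq:
  assumes "r \<in> Istar n" "s \<in> Istar n" "Kr r = Kr s" "Cr r = Cr s" "Xr r = Xr s"
  shows "r = s"
proof -
  have *: "(p,q) \<in> s" if "(p,q) \<in> r" "Kr r = Kr s" "Cr r = Cr s" "Xr r = Xr s"
     "r \<in> Istar n" "s \<in> Istar n" for p q r s
  proof (cases p; cases q)
    fix a b assume "p = Inr a" "q = Inl b"
    then have "(b,a) \<in> Xr r" using that Istar_sym[of r n p q] by (auto simp: Xr_def)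
    then have "(Inl b, Inr a) \<in> s" using that(4) by (auto simp: Xr_def)
    then show ?thesis using that Istar_sym[of s n "Inl b" "Inr a"] \<open>p = _\<close> \<open>q = _\<close> by auto
  qed (use that in \<open>auto simp: Kr_def Cr_def Xr_def\<close>)
  show ?thesis using *[of _ _ r s] *[of _ _ s r] assms by auto
qed

definition Gen :: "prel \<Rightarrow> prel \<Rightarrow> ((nat \<times> nat) \<times> (nat \<times> nat)) set" where
  "Gen x y = (\<lambda>(a, b). (embL a, embL b)) ` x \<union> (\<lambda>(a, b). (embR a, embR b)) ` y"

lemma pmult_Gen: "pmult n x y = {(a, b). a \<in> pts n \<and> b \<in> pts n \<and> (embO a, embO b) \<in> (Gen x y)\<^sup>*}"
  by (simp add: pmult_def Gen_def)

lemma GenE: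
  assumes "(u,v) \<in> Gen x y"
  obtains p q where "(p,q) \<in> x" "u = embL p" "v = embL q"
    | p q where "(p,q) \<in> y" "u = embR p" "v = embR q"
  using assms unfolding Gen_def by auto

lemma GenL: "(p,q) \<in> x \<Longrightarrow> (embL p, embL q) \<in> Gen x y"
  unfolding Gen_def by force
lemma GenR: "(p,q) \<in> y \<Longrightarrow> (embR p, embR q) \<in> Gen x y"
  unfolding Gen_def by force

lemma pmult_Istar:
  assumes x: "x \<in> Istar n" and y: "y \<in> Istar n"
  shows "pmult n x y \<in> Istar n"
proof -
  have symG: "sym (Gen x y)"
    unfolding sym_def
  proof (intro allI impI)
    fix u v assume "(u,v) \<in> Gen x y"
    then show "(v,u) \<in> Gen x y"
      by (cases rule: GenE) (auto intro: GenL GenR Istar_sym[OF x] Istar_sym[OF y])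
  qed
  have eq: "equiv (pts n) (pmult n x y)"
    unfolding equiv_def
  proof (intro conjI)
    show "pmult n x y \<subseteq> pts n \<times> pts n" by (auto simp: pmult_Gen)
    show "refl_on (pts n) (pmult n x y)" by (auto simp: pmult_Gen refl_on_def)
    have ss: "\<And>u v. (u,v) \<in> (Gen x y)\<^sup>* \<Longrightarrow> (v,u) \<in> (Gen x y)\<^sup>*"
      using sym_rtrancl[OF symG] by (meson symD)
    show "sym (pmult n x y)" using ss by (auto simp: pmult_Gen sym_def)
    show "trans (pmult n x y)" unfolding trans_def pmult_Gen
      by (auto intro: rtrancl_trans)
  qed
  have ex: "(\<exists>i\<in>{1..n}. (a, Inl i) \<in> pmult n x y) \<and> (\<exists>j\<in>{1..n}. (a, Inr j) \<in> pmult n x y)"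
    if a: "a \<in> pts n" for a
  proof (cases a)
    case (Inl i)
    then have i: "i \<in> {1..n}" using a by simp
    obtain m where m: "m \<in> {1..n}" "(Inl i, Inr m) \<in> x" using Istar_R[OF x, of "Inl i"] i by auto
    obtain j where j: "j \<in> {1..n}" "(Inl m, Inr j) \<in> y" using Istar_R[OF y, of "Inl m"] m by auto
    have "((0,i),(1,m)) \<in> Gen x y" using GenL[OF m(2), of y] by simp
    moreover have "((1,m),(2,j)) \<in> Gen x y" using GenR[OF j(2), of x] by simp
    ultimately have "((0,i),(2,j)) \<in> (Gen x y)\<^sup>*" by (meson converse_rtrancl_into_rtrancl r_into_rtrancl)
    then have "(a, Inr j) \<in> pmult n x y" using Inl i j by (auto simp: pmult_Gen)
    moreover have "(a, Inl i) \<in> pmult n x y" using Inl i by (auto simp: pmult_Gen)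
    ultimately show ?thesis using i j by blast
  next
    case (Inr j)
    then have j: "j \<in> {1..n}" using a by simp
    obtain m where m: "m \<in> {1..n}" "(Inr j, Inl m) \<in> y" using Istar_L[OF y, of "Inr j"] j by auto
    obtain i where i: "i \<in> {1..n}" "(Inr m, Inl i) \<in> x" using Istar_L[OF x, of "Inr m"] m by auto
    have "((2,j),(1,m)) \<in> Gen x y" using GenR[OF m(2), of x] by simp
    moreover have "((1,m),(0,i)) \<in> Gen x y" using GenL[OF i(2), of y] by simp
    ultimately have "((2,j),(0,i)) \<in> (Gen x y)\<^sup>*" by (meson converse_rtrancl_into_rtrancl r_into_rtrancl)
    then have "(a, Inl i) \<in> pmult n x y" using Inr i j by (auto simp: pmult_Gen)
    moreover have "(a, Inr j) \<in> pmult n x y" using Inr j by (auto simp: pmult_Gen)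
    ultimately show ?thesis using i j by blast
  qed
  show ?thesis using eq ex unfolding Istar_def by blast
qed

lemma mono_K:
  assumes x: "x \<in> Istar n" shows "Kr x \<subseteq> Kr (pmult n x y)"
proof
  fix p assume "p \<in> Kr x"
  then obtain i j where p: "p = (i,j)" "(Inl i, Inl j) \<in> x" by (auto simp: Kr_def)
  have "((0,i),(0,j)) \<in> Gen x y" using GenL[OF p(2), of y] by simp
  then show "p \<in> Kr (pmult n x y)" using p Istar_sub[OF x p(2)] by (auto simp: Kr_def pmult_Gen)
qed

lemma mono_C:
  assumes y: "y \<in> Istar n" shows "Cr y \<subseteq> Cr (pmult n x y)"
proof
  fix p assume "p \<in> Cr y"
  then obtain i j where p: "p = (i,j)" "(Inr i, Inr j) \<in> y" by (auto simp: Cr_def)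
  have "((2,i),(2,j)) \<in> Gen x y" using GenR[OF p(2), of x] by simp
  then show "p \<in> Cr (pmult n x y)" using p Istar_sub[OF y p(2)] by (auto simp: Cr_def pmult_Gen)
qed


lemma prod_lemma:
  assumes x: "x \<in> Istar n" and y: "y \<in> Istar n" and mid: "Cr x = Kr y"
  shows "Kr (pmult n x y) = Kr x" "Cr (pmult n x y) = Cr y" "Xr (pmult n x y) = Xr x O Xr y"
proof -
  have midD: "(Inr a, Inr b) \<in> x \<longleftrightarrow> (Inl a, Inl b) \<in> y" for a b
    using mid unfolding Cr_def Kr_def by (auto simp: set_eq_iff)
  note tx = Istar_trans[OF x] and sx = Istar_sym[OF x] and ty = Istar_trans[OF y] and sy = Istar_sym[OF y]
  define R0 where "R0 i (w::nat\<times>nat) \<longleftrightarrow> (fst w = 0 \<and> (Inl i, Inl (snd w)) \<in> x) \<or>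
      (fst w = 1 \<and> (Inl i, Inr (snd w)) \<in> x) \<or>
      (fst w = 2 \<and> (\<exists>m. (Inl i, Inr m) \<in> x \<and> (Inl m, Inr (snd w)) \<in> y))" for i w
  define R2 where "R2 j (w::nat\<times>nat) \<longleftrightarrow> (fst w = 2 \<and> (Inr j, Inr (snd w)) \<in> y) \<or>
      (fst w = 1 \<and> (Inl (snd w), Inr j) \<in> y) \<or>
      (fst w = 0 \<and> (\<exists>m. (Inl (snd w), Inr m) \<in> x \<and> (Inl m, Inr j) \<in> y))" for j w
  have step0: "R0 i v" if "(u,v) \<in> Gen x y" "R0 i u" for i u v
    using that(1)
  proof (cases rule: GenE)
    case (1 p q)
    then show ?thesis using that(2) unfolding R0_def
      by (cases p; cases q; auto intro: tx sx; metis midD tx sx)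
  next
    case (2 p q)
    then show ?thesis using that(2) unfolding R0_def
      by (cases p; cases q; auto intro: ty sy; metis midD tx sx ty sy)
  qed
  have step2: "R2 j v" if "(u,v) \<in> Gen x y" "R2 j u" for j u v
    using that(1)
  proof (cases rule: GenE)
    case (1 p q)
    then show ?thesis using that(2) unfolding R2_def
      by (cases p; cases q; auto intro: tx sx; metis midD tx sx ty sy)
  next
    case (2 p q)
    then show ?thesis using that(2) unfolding R2_def
      by (cases p; cases q; auto intro: ty sy; metis midD ty sy)
  qed
  have reach0: "R0 i w" if "((0,i), w) \<in> (Gen x y)\<^sup>*" "i \<in> {1..n}" for i w
    using that(1)
  proof (induction rule: rtrancl_induct)
    case base then show ?case using Istar_refl[OF x, of "Inl i"] that(2) by (simp add: R0_def)
  next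
    case (step v w) then show ?case using step0 by blast
  qed
  have reach2: "R2 j w" if "((2,j), w) \<in> (Gen x y)\<^sup>*" "j \<in> {1..n}" for j w
    using that(1)
  proof (induction rule: rtrancl_induct)
    case base then show ?case using Istar_refl[OF y, of "Inr j"] that(2) by (simp add: R2_def)
  next
    case (step v w) then show ?case using step2 by blast
  qed
  show "Kr (pmult n x y) = Kr x"
  proof
    show "Kr x \<subseteq> Kr (pmult n x y)" by (rule mono_K[OF x])
    show "Kr (pmult n x y) \<subseteq> Kr x"
    proof
      fix p assume "p \<in> Kr (pmult n x y)"
      then obtain i j where p: "p = (i,j)" "i \<in> {1..n}" "((0,i),(0,j)) \<in> (Gen x y)\<^sup>*"
        by (auto simp: Kr_def pmult_Gen)
      show "p \<in> Kr x" using reach0[OF p(3) p(2)] p(1) by (simp add: R0_def Kr_def)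
    qed
  qed
  show "Cr (pmult n x y) = Cr y"
  proof
    show "Cr y \<subseteq> Cr (pmult n x y)" by (rule mono_C[OF y])
    show "Cr (pmult n x y) \<subseteq> Cr y"
    proof
      fix p assume "p \<in> Cr (pmult n x y)"
      then obtain i j where p: "p = (i,j)" "i \<in> {1..n}" "((2,i),(2,j)) \<in> (Gen x y)\<^sup>*"
        by (auto simp: Cr_def pmult_Gen)
      show "p \<in> Cr y" using reach2[OF p(3) p(2)] p(1) by (simp add: R2_def Cr_def)
    qed
  qed
  show "Xr (pmult n x y) = Xr x O Xr y"
  proof
    show "Xr (pmult n x y) \<subseteq> Xr x O Xr y"
    proof
      fix p assume "p \<in> Xr (pmult n x y)"
      then obtain i j where p: "p = (i,j)" "i \<in> {1..n}" "((0,i),(2,j)) \<in> (Gen x y)\<^sup>*"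
        by (auto simp: Xr_def pmult_Gen)
      show "p \<in> Xr x O Xr y" using reach0[OF p(3) p(2)] p(1) by (auto simp add: R0_def Xr_def)
    qed
    show "Xr x O Xr y \<subseteq> Xr (pmult n x y)"
    proof
      fix p assume "p \<in> Xr x O Xr y"
      then obtain i m j where p: "p = (i,j)" "(Inl i, Inr m) \<in> x" "(Inl m, Inr j) \<in> y"
        by (auto simp: Xr_def)
      have "((0,i),(1,m)) \<in> Gen x y" using GenL[OF p(2), of y] by simp
      moreover have "((1,m),(2,j)) \<in> Gen x y" using GenR[OF p(3), of x] by simp
      ultimately have "((0,i),(2,j)) \<in> (Gen x y)\<^sup>*" by (meson converse_rtrancl_into_rtrancl r_into_rtrancl)
      then show "p \<in> Xr (pmult n x y)" using p Istar_sub[OF x p(2)] Istar_sub[OF y p(3)]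
        by (auto simp: Xr_def pmult_Gen)
    qed
  qed
qed


lemma Kr_equiv: assumes x: "x \<in> Istar n" shows "equiv {1..n} (Kr x)"
proof (rule equivI)
  show "Kr x \<subseteq> {1..n} \<times> {1..n}" by (auto simp: Kr_def dest!: Istar_sub[OF x])
  show "refl_on {1..n} (Kr x)" unfolding refl_on_def Kr_def using Istar_refl[OF x] by simp
  show "sym (Kr x)" unfolding sym_def Kr_def using Istar_sym[OF x] by blast
  show "trans (Kr x)" unfolding trans_def Kr_def using Istar_trans[OF x] by blast
qed

lemma Cr_equiv: assumes x: "x \<in> Istar n" shows "equiv {1..n} (Cr x)"
proof (rule equivI)
  show "Cr x \<subseteq> {1..n} \<times> {1..n}" by (auto simp: Cr_def dest!: Istar_sub[OF x])
  show "refl_on {1..n} (Cr x)" unfolding refl_on_def Cr_def using Istar_refl[OF x] by simp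
  show "sym (Cr x)" unfolding sym_def Cr_def using Istar_sym[OF x] by blast
  show "trans (Cr x)" unfolding trans_def Cr_def using Istar_trans[OF x] by blast
qed

lemma card_K:
  assumes x: "x \<in> Istar n" shows "card (pts n // x) = card ({1..n} // Kr x)"
proof -
  define f where "f B = {i. Inl i \<in> B}" for B :: "(nat + nat) set"
  have cls: "\<exists>i\<in>{1..n}. B = x `` {Inl i}" if hB: "B \<in> pts n // x" for B
  proof -
    obtain p where p: "B = x `` {p}" "p \<in> pts n" using hB by (rule quotientE)
    obtain i where i: "i \<in> {1..n}" "(p, Inl i) \<in> x" using Istar_L[OF x p(2)] by blast
    have "x `` {p} = x `` {Inl i}" using equiv_class_eq[OF Istar_equiv[OF x] i(2)] .
    then show ?thesis using i(1) p(1) by blast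
  qed
  have fK: "f (x `` {Inl i}) = Kr x `` {i}" for i by (auto simp: f_def Kr_def)
  have "bij_betw f (pts n // x) ({1..n} // Kr x)"
  proof (rule bij_betw_imageI)
    show "inj_on f (pts n // x)"
    proof
      fix B1 B2 assume B1: "B1 \<in> pts n // x" and B2: "B2 \<in> pts n // x" and eq: "f B1 = f B2"
      obtain i1 where i1: "i1 \<in> {1..n}" "B1 = x `` {Inl i1}" using cls[OF B1] by auto
      obtain i2 where i2: "i2 \<in> {1..n}" "B2 = x `` {Inl i2}" using cls[OF B2] by auto
      have "i1 \<in> f B1" using i1 Istar_refl[OF x, of "Inl i1"] by (simp add: f_def)
      then have "i1 \<in> f B2" using eq by simp
      then have "(Inl i2, Inl i1) \<in> x" using i2(2) by (simp add: f_def)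
      from equiv_class_eq[OF Istar_equiv[OF x] this] show "B1 = B2" using i1 i2 by simp
    qed
    show "f ` (pts n // x) = {1..n} // Kr x"
    proof
      show "f ` (pts n // x) \<subseteq> {1..n} // Kr x"
      proof
        fix C assume "C \<in> f ` (pts n // x)"
        then obtain B where B: "B \<in> pts n // x" "C = f B" by blast
        obtain i where i: "i \<in> {1..n}" "B = x `` {Inl i}" using cls[OF B(1)] by blast
        have "C = Kr x `` {i}" using B(2) i(2) fK by simp
        then show "C \<in> {1..n} // Kr x" using i(1) by (simp add: quotientI)
      qed
      show "{1..n} // Kr x \<subseteq> f ` (pts n // x)"
      proof
        fix C assume "C \<in> {1..n} // Kr x"
        then obtain i where i: "C = Kr x `` {i}" "i \<in> {1..n}" by (rule quotientE)
        have "x `` {Inl i} \<in> pts n // x" using i by (simp add: quotientI)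
        moreover have "C = f (x `` {Inl i})" using fK i by simp
        ultimately show "C \<in> f ` (pts n // x)" by (rule rev_image_eqI)
      qed
    qed
  qed
  then show ?thesis by (rule bij_betw_same_card)
qed

lemma card_C:
  assumes x: "x \<in> Istar n" shows "card (pts n // x) = card ({1..n} // Cr x)"
proof -
  define f where "f B = {i. Inr i \<in> B}" for B :: "(nat + nat) set"
  have cls: "\<exists>i\<in>{1..n}. B = x `` {Inr i}" if hB: "B \<in> pts n // x" for B
  proof -
    obtain p where p: "B = x `` {p}" "p \<in> pts n" using hB by (rule quotientE)
    obtain i where i: "i \<in> {1..n}" "(p, Inr i) \<in> x" using Istar_R[OF x p(2)] by blast
    have "x `` {p} = x `` {Inr i}" using equiv_class_eq[OF Istar_equiv[OF x] i(2)] .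
    then show ?thesis using i(1) p(1) by blast
  qed
  have fK: "f (x `` {Inr i}) = Cr x `` {i}" for i by (auto simp: f_def Cr_def)
  have "bij_betw f (pts n // x) ({1..n} // Cr x)"
  proof (rule bij_betw_imageI)
    show "inj_on f (pts n // x)"
    proof
      fix B1 B2 assume B1: "B1 \<in> pts n // x" and B2: "B2 \<in> pts n // x" and eq: "f B1 = f B2"
      obtain i1 where i1: "i1 \<in> {1..n}" "B1 = x `` {Inr i1}" using cls[OF B1] by auto
      obtain i2 where i2: "i2 \<in> {1..n}" "B2 = x `` {Inr i2}" using cls[OF B2] by auto
      have "i1 \<in> f B1" using i1 Istar_refl[OF x, of "Inr i1"] by (simp add: f_def)
      then have "i1 \<in> f B2" using eq by simp
      then have "(Inr i2, Inr i1) \<in> x" using i2(2) by (simp add: f_def)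
      from equiv_class_eq[OF Istar_equiv[OF x] this] show "B1 = B2" using i1 i2 by simp
    qed
    show "f ` (pts n // x) = {1..n} // Cr x"
    proof
      show "f ` (pts n // x) \<subseteq> {1..n} // Cr x"
      proof
        fix C assume "C \<in> f ` (pts n // x)"
        then obtain B where B: "B \<in> pts n // x" "C = f B" by blast
        obtain i where i: "i \<in> {1..n}" "B = x `` {Inr i}" using cls[OF B(1)] by blast
        have "C = Cr x `` {i}" using B(2) i(2) fK by simp
        then show "C \<in> {1..n} // Cr x" using i(1) by (simp add: quotientI)
      qed
      show "{1..n} // Cr x \<subseteq> f ` (pts n // x)"
      proof
        fix C assume "C \<in> {1..n} // Cr x"
        then obtain i where i: "C = Cr x `` {i}" "i \<in> {1..n}" by (rule quotientE)
        have "x `` {Inr i} \<in> pts n // x" using i by (simp add: quotientI)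
        moreover have "C = f (x `` {Inr i})" using fK i by simp
        ultimately show "C \<in> f ` (pts n // x)" by (rule rev_image_eqI)
      qed
    qed
  qed
  then show ?thesis by (rule bij_betw_same_card)
qed

lemma refine_card:
  assumes A: "finite A" and e1: "equiv A R1" and e2: "equiv A R2" and sub: "R1 \<subseteq> R2"
  shows "card (A // R2) \<le> card (A // R1)"
    and "card (A // R1) \<le> card (A // R2) \<Longrightarrow> R1 = R2"
proof -
  define g where "g X = R2 `` X" for X
  have gcl: "g (R1 `` {a}) = R2 `` {a}" if "a \<in> A" for a
  proof -
    have "R2 `` (R1 `` {a}) \<subseteq> R2 `` {a}"
      using e2 sub unfolding equiv_def trans_def by blast
    moreover have "R2 `` {a} \<subseteq> R2 `` (R1 `` {a})"
      using e1 that unfolding equiv_def refl_on_def by blast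
    ultimately show ?thesis by (simp add: g_def)
  qed
  have img: "g ` (A // R1) = A // R2"
    unfolding quotient_def using gcl by auto
  have fin: "finite (A // R1)" using A e1 by (auto intro: finite_quotient simp: equiv_def)
  show "card (A // R2) \<le> card (A // R1)" using card_image_le[OF fin, of g] img by simp
  assume le: "card (A // R1) \<le> card (A // R2)"
  have "card (g ` (A // R1)) = card (A // R1)"
    using le img card_image_le[OF fin, of g] by simp
  then have inj: "inj_on g (A // R1)" by (rule eq_card_imp_inj_on[OF fin])
  show "R1 = R2"
  proof
    show "R2 \<subseteq> R1"
    proof
      fix p assume p: "p \<in> R2"
      then obtain a b where ab: "p = (a,b)" "a \<in> A" "b \<in> A" using e2 unfolding equiv_def by blast
      have "R2 `` {a} = R2 `` {b}" using equiv_class_eq[OF e2] p ab by simp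
      then have "g (R1 `` {a}) = g (R1 `` {b})" using gcl ab by simp
      then have "R1 `` {a} = R1 `` {b}"
        using inj ab by (auto intro: quotientI dest: inj_onD)
      then show "p \<in> R1" using eq_equiv_class[OF _ e1] ab by auto
    qed
  qed (rule sub)
qed

lemma card_quot_le: "finite A \<Longrightarrow> card (A // R) \<le> card A"
  unfolding quotient_def
  by (metis UNION_singleton_eq_range card_image_le)

lemma card_quot_Id: "card (A // Id_on A) = card A"
proof -
  have "A // Id_on A = (\<lambda>a. {a}) ` A" unfolding quotient_def by auto
  then show ?thesis by (simp add: card_image)
qed

lemma Id_on_sub: "equiv A R \<Longrightarrow> Id_on A \<subseteq> R"
  unfolding equiv_def refl_on_def by auto

lemma equiv_Id_on: "equiv A (Id_on A)"
  unfolding equiv_def refl_on_def sym_def trans_def by auto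


fun swp :: "nat + nat \<Rightarrow> nat + nat" where
  "swp (Inl i) = Inr i" | "swp (Inr i) = Inl i"

lemma swp_swp[simp]: "swp (swp p) = p" by (cases p) auto
lemma swp_pts[simp]: "swp p \<in> pts n \<longleftrightarrow> p \<in> pts n" by (cases p) auto

definition flip :: "prel \<Rightarrow> prel" where "flip r = {(p,q). (swp p, swp q) \<in> r}"

lemma flip_Istar: assumes a: "a \<in> Istar n" shows "flip a \<in> Istar n"
proof -
  have eq: "equiv (pts n) (flip a)"
  proof (rule equivI)
    show "flip a \<subseteq> pts n \<times> pts n" using Istar_sub[OF a] unfolding flip_def by force
    show "refl_on (pts n) (flip a)" unfolding refl_on_def flip_def using Istar_refl[OF a] by simp
    show "sym (flip a)" unfolding sym_def flip_def using Istar_sym[OF a] by blast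
    show "trans (flip a)" unfolding trans_def flip_def using Istar_trans[OF a] by blast
  qed
  have "(\<exists>i\<in>{1..n}. (p, Inl i) \<in> flip a) \<and> (\<exists>j\<in>{1..n}. (p, Inr j) \<in> flip a)" if "p \<in> pts n" for p
    using Istar_L[OF a, of "swp p"] Istar_R[OF a, of "swp p"] that by (auto simp: flip_def)
  then show ?thesis using eq unfolding Istar_def by blast
qed

lemma flip_K: "Kr (flip a) = Cr a" and flip_C: "Cr (flip a) = Kr a"
  by (auto simp: Kr_def Cr_def flip_def)

lemma flip_X: "a \<in> Istar n \<Longrightarrow> Xr (flip a) = (Xr a)\<inverse>"
  using Istar_sym[of a n] by (auto simp: Xr_def flip_def)

lemma Xr_props:
  assumes a: "a \<in> Istar n"
  shows "Kr a O Xr a = Xr a" "Xr a O Cr a = Xr a" "Xr a O (Xr a)\<inverse> = Kr a" "(Xr a)\<inverse> O Xr a = Cr a"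
proof -
  note t = Istar_trans[OF a] and s = Istar_sym[OF a] and r = Istar_refl[OF a] and sb = Istar_sub[OF a]
  show "Kr a O Xr a = Xr a"
  proof
    show "Kr a O Xr a \<subseteq> Xr a" by (auto simp: Kr_def Xr_def intro: t)
    show "Xr a \<subseteq> Kr a O Xr a"
    proof
      fix p assume "p \<in> Xr a"
      then obtain i j where p: "p = (i,j)" "(Inl i, Inr j) \<in> a" by (auto simp: Xr_def)
      have "(Inl i, Inl i) \<in> a" using r sb[OF p(2)] by blast
      then show "p \<in> Kr a O Xr a" using p by (auto simp: Kr_def Xr_def)
    qed
  qed
  show "Xr a O Cr a = Xr a"
  proof
    show "Xr a O Cr a \<subseteq> Xr a" by (auto simp: Cr_def Xr_def intro: t)
    show "Xr a \<subseteq> Xr a O Cr a"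
    proof
      fix p assume "p \<in> Xr a"
      then obtain i j where p: "p = (i,j)" "(Inl i, Inr j) \<in> a" by (auto simp: Xr_def)
      have "(Inr j, Inr j) \<in> a" using r sb[OF p(2)] by blast
      then show "p \<in> Xr a O Cr a" using p by (auto simp: Cr_def Xr_def)
    qed
  qed
  show "Xr a O (Xr a)\<inverse> = Kr a"
  proof
    show "Xr a O (Xr a)\<inverse> \<subseteq> Kr a" by (auto simp: Kr_def Xr_def intro: t s)
    show "Kr a \<subseteq> Xr a O (Xr a)\<inverse>"
    proof
      fix p assume "p \<in> Kr a"
      then obtain i j where p: "p = (i,j)" "(Inl i, Inl j) \<in> a" by (auto simp: Kr_def)
      obtain m where m: "(Inl i, Inr m) \<in> a" using Istar_R[OF a, of "Inl i"] sb[OF p(2)] by blast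
      have "(Inl j, Inr m) \<in> a" using t[OF s[OF p(2)] m] .
      then show "p \<in> Xr a O (Xr a)\<inverse>" using p m by (auto simp: Xr_def)
    qed
  qed
  show "(Xr a)\<inverse> O Xr a = Cr a"
  proof
    show "(Xr a)\<inverse> O Xr a \<subseteq> Cr a" by (auto simp: Cr_def Xr_def intro: t s)
    show "Cr a \<subseteq> (Xr a)\<inverse> O Xr a"
    proof
      fix p assume "p \<in> Cr a"
      then obtain i j where p: "p = (i,j)" "(Inr i, Inr j) \<in> a" by (auto simp: Cr_def)
      obtain m where m: "(Inr i, Inl m) \<in> a" using Istar_L[OF a, of "Inr i"] sb[OF p(2)] by blast
      have "(Inl m, Inr j) \<in> a" using t[OF s[OF m] p(2)] .
      then show "p \<in> (Xr a)\<inverse> O Xr a" using p m s[OF m] by (auto simp: Xr_def)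
    qed
  qed
qed


theorem mainTheorem11:
  fixes n :: nat and e :: "((nat + nat) \<times> (nat + nat)) set"
  assumes "n \<ge> 2"
    and "e \<in> Istar n"
    and "pmult n e e = e"
    and "prank n e = n - 1"
  shows "subsemigroup (Istar n) (pmult n) (Hclass (Istar n) (pmult n) e)
       \<and> isolated (Istar n) (pmult n) (Hclass (Istar n) (pmult n) e)"
proof -
  note n2 = assms(1) and eI = assms(2) and ee = assms(3) and rk = assms(4)
  define A where "A = {1..n::nat}"
  have cardA: "card A = n" by (simp add: A_def)
  have finA: "finite A" by (simp add: A_def)
  have E1: "Kr e \<subseteq> Cr e"
  proof
    fix p assume "p \<in> Kr e"
    then obtain m m' where p: "p = (m,m')" "(Inl m, Inl m') \<in> e" by (auto simp: Kr_def)
    have mm: "m \<in> {1..n}" "m' \<in> {1..n}" using Istar_sub[OF eI p(2)] by auto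
    obtain i where i: "(Inr m, Inl i) \<in> e" using Istar_L[OF eI, of "Inr m"] mm by auto
    obtain j where j: "(Inr m', Inl j) \<in> e" using Istar_L[OF eI, of "Inr m'"] mm by auto
    have g1: "((0,i),(1,m)) \<in> Gen e e" using GenL[OF Istar_sym[OF eI i], of e] by simp
    have g2: "((1,m),(1,m')) \<in> Gen e e" using GenR[OF p(2), of e] by simp
    have g3: "((1,m'),(0,j)) \<in> Gen e e" using GenL[OF j, of e] by simp
    have "((0,i),(0,j)) \<in> (Gen e e)\<^sup>*"
      using rtrancl_into_rtrancl[OF rtrancl_into_rtrancl[OF r_into_rtrancl[OF g1] g2] g3] .
    moreover have "i \<in> {1..n}" "j \<in> {1..n}" using Istar_sub[OF eI i] Istar_sub[OF eI j] by auto
    ultimately have "(Inl i, Inl j) \<in> pmult n e e" by (simp add: pmult_Gen)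
    then have ij: "(Inl i, Inl j) \<in> e" using ee by simp
    have "(Inr m, Inr m') \<in> e"
      using Istar_trans[OF eI, OF Istar_trans[OF eI i ij] Istar_sym[OF eI j]] .
    then show "p \<in> Cr e" using p by (simp add: Cr_def)
  qed
  have cKe: "card (A // Kr e) = n - 1" using card_K[OF eI] rk by (simp add: prank_def A_def)
  have cCe: "card (A // Cr e) = n - 1" using card_C[OF eI] rk by (simp add: prank_def A_def)
  have KCe: "Kr e = Cr e"
    using refine_card(2)[OF finA Kr_equiv[OF eI, folded A_def] Cr_equiv[OF eI, folded A_def] E1]
      cKe cCe by simp
  have Xee: "Xr e = Xr e O Xr e" using prod_lemma(3)[OF eI eI] KCe ee by simp
  have diag: "(Inl i, Inr i) \<in> e" if i: "i \<in> {1..n}" for i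
  proof -
    obtain m where m: "(Inl i, Inr m) \<in> e" using Istar_R[OF eI, of "Inl i"] i by auto
    have mA: "m \<in> {1..n}" using Istar_sub[OF eI m] by simp
    obtain j where j: "(Inl m, Inr j) \<in> e" using Istar_R[OF eI, of "Inl m"] mA by auto
    have "(i,j) \<in> Xr e O Xr e" using m j by (auto simp: Xr_def)
    then have ij: "(Inl i, Inr j) \<in> e" using Xee by (auto simp: Xr_def)
    have "(Inl i, Inl m) \<in> e" using Istar_trans[OF eI ij Istar_sym[OF eI j]] .
    then have "(Inr i, Inr m) \<in> e" using KCe by (auto simp: Kr_def Cr_def)
    then show ?thesis using Istar_trans[OF eI m Istar_sym[OF eI]] by blast
  qed
  have XKe: "Xr e = Kr e"
  proof -
    have "(Inl i, Inr j) \<in> e \<longleftrightarrow> (Inr i, Inr j) \<in> e" for i j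
    proof
      assume h: "(Inl i, Inr j) \<in> e"
      have "i \<in> {1..n}" using Istar_sub[OF eI h] by simp
      then show "(Inr i, Inr j) \<in> e" using Istar_trans[OF eI Istar_sym[OF eI diag] h] by blast
    next
      assume h: "(Inr i, Inr j) \<in> e"
      have "i \<in> {1..n}" using Istar_sub[OF eI h] by simp
      then show "(Inl i, Inr j) \<in> e" using Istar_trans[OF eI diag h] by blast
    qed
    then have "Xr e = Cr e" by (auto simp: Xr_def Cr_def)
    then show ?thesis using KCe by simp
  qed
  define Q where "Q = {a \<in> Istar n. Kr a = Kr e \<and> Cr a = Cr e}"
  have HQ: "Hclass (Istar n) (pmult n) e = Q"
  proof
    show "Hclass (Istar n) (pmult n) e \<subseteq> Q"
    proof
      fix a assume "a \<in> Hclass (Istar n) (pmult n) e"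
      then have aI: "a \<in> Istar n" and h1: "in_right_S1 (Istar n) (pmult n) a e"
        and h2: "in_right_S1 (Istar n) (pmult n) e a" and h3: "in_left_S1 (Istar n) (pmult n) a e"
        and h4: "in_left_S1 (Istar n) (pmult n) e a" by (auto simp: Hclass_def)
      have "Kr e \<subseteq> Kr a" using h1 mono_K[OF eI] by (auto simp: in_right_S1_def)
      moreover have "Kr a \<subseteq> Kr e" using h2 mono_K[OF aI] by (auto simp: in_right_S1_def)
      moreover have "Cr e \<subseteq> Cr a" using h3 mono_C[OF eI] by (auto simp: in_left_S1_def)
      moreover have "Cr a \<subseteq> Cr e" using h4 mono_C[OF aI] by (auto simp: in_left_S1_def)
      ultimately show "a \<in> Q" using aI by (auto simp: Q_def)
    qed
    show "Q \<subseteq> Hclass (Istar n) (pmult n) e"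
    proof
      fix a assume "a \<in> Q"
      then have aI: "a \<in> Istar n" and Ka: "Kr a = Kr e" and Ca: "Cr a = Cr e" by (auto simp: Q_def)
      have fI: "flip a \<in> Istar n" by (rule flip_Istar[OF aI])
      note XP = Xr_props[OF aI]
      have 1: "a = pmult n e a"
      proof (rule rep_eq[OF aI pmult_Istar[OF eI aI]])
        have mid: "Cr e = Kr a" using Ka KCe by simp
        show "Kr a = Kr (pmult n e a)" using prod_lemma(1)[OF eI aI mid] Ka by simp
        show "Cr a = Cr (pmult n e a)" using prod_lemma(2)[OF eI aI mid] by simp
        show "Xr a = Xr (pmult n e a)" using prod_lemma(3)[OF eI aI mid] XKe Ka XP(1) by simp
      qed
      have 2: "a = pmult n a e"
      proof (rule rep_eq[OF aI pmult_Istar[OF aI eI]])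
        have mid: "Cr a = Kr e" using Ca KCe by simp
        show "Kr a = Kr (pmult n a e)" using prod_lemma(1)[OF aI eI mid] by simp
        show "Cr a = Cr (pmult n a e)" using prod_lemma(2)[OF aI eI mid] Ca by simp
        show "Xr a = Xr (pmult n a e)" using prod_lemma(3)[OF aI eI mid] XKe KCe Ca XP(2) by simp
      qed
      have 3: "e = pmult n a (flip a)"
      proof (rule rep_eq[OF eI pmult_Istar[OF aI fI]])
        have mid: "Cr a = Kr (flip a)" by (simp add: flip_K)
        show "Kr e = Kr (pmult n a (flip a))" using prod_lemma(1)[OF aI fI mid] Ka by simp
        show "Cr e = Cr (pmult n a (flip a))" using prod_lemma(2)[OF aI fI mid] Ka KCe flip_C by simp
        show "Xr e = Xr (pmult n a (flip a))"
          using prod_lemma(3)[OF aI fI mid] XKe Ka XP(3) flip_X[OF aI] by simp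
      qed
      have 4: "e = pmult n (flip a) a"
      proof (rule rep_eq[OF eI pmult_Istar[OF fI aI]])
        have mid: "Cr (flip a) = Kr a" by (simp add: flip_C)
        show "Kr e = Kr (pmult n (flip a) a)" using prod_lemma(1)[OF fI aI mid] Ca KCe flip_K by simp
        show "Cr e = Cr (pmult n (flip a) a)" using prod_lemma(2)[OF fI aI mid] Ca by simp
        show "Xr e = Xr (pmult n (flip a) a)"
          using prod_lemma(3)[OF fI aI mid] XKe KCe Ca XP(4) flip_X[OF aI] by simp
      qed
      show "a \<in> Hclass (Istar n) (pmult n) e"
        unfolding Hclass_def in_right_S1_def in_left_S1_def
        using aI fI 1 2 3 4 by blast
    qed
  qed
  have sub: "subsemigroup (Istar n) (pmult n) Q"
    unfolding subsemigroup_def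
  proof (intro conjI ballI)
    show "Q \<subseteq> Istar n" by (auto simp: Q_def)
    fix a b assume a: "a \<in> Q" and b: "b \<in> Q"
    then have aI: "a \<in> Istar n" and bI: "b \<in> Istar n" by (auto simp: Q_def)
    have mid: "Cr a = Kr b" using a b KCe by (auto simp: Q_def)
    show "pmult n a b \<in> Q"
      using prod_lemma(1,2)[OF aI bI mid] pmult_Istar[OF aI bI] a b by (auto simp: Q_def)
  qed
  have iso: "isolated (Istar n) (pmult n) Q"
    unfolding isolated_def
  proof (intro ballI allI impI)
    fix a k assume aI: "a \<in> Istar n" and k: "1 \<le> k" and pk: "spow (pmult n) a k \<in> Q"
    obtain k' where kk: "k = Suc k'" using k by (cases k) auto
    have sp: "spow (pmult n) a (Suc j) \<in> Istar n \<and> Kr a \<subseteq> Kr (spow (pmult n) a (Suc j))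
        \<and> Cr a \<subseteq> Cr (spow (pmult n) a (Suc j))" for j
    proof (induction j)
      case 0 then show ?case using aI by simp
    next
      case (Suc j)
      then show ?case using pmult_Istar[OF _ aI] mono_K[of "spow (pmult n) a (Suc j)" n a]
        mono_C[OF aI, of "spow (pmult n) a (Suc j)"] by auto
    qed
    have spid: "Kr (spow (pmult n) a (Suc j)) = Id_on A \<and> Cr (spow (pmult n) a (Suc j)) = Id_on A"
      if "Kr a = Id_on A" "Cr a = Id_on A" for j
    proof (induction j)
      case 0 then show ?case using that by simp
    next
      case (Suc j)
      have mid: "Cr (spow (pmult n) a (Suc j)) = Kr a" using Suc that by simp
      show ?case using prod_lemma(1,2)[OF conjunct1[OF sp[of j]] aI mid] Suc that by simp
    qed
    have Kae: "Kr a \<subseteq> Kr e" and Cae: "Cr a \<subseteq> Cr e"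
      using sp[of k'] pk kk by (auto simp: Q_def)
    have eqKC: "card (A // Kr a) = card (A // Cr a)" using card_K[OF aI] card_C[OF aI] by (simp add: A_def)
    have KaE: "equiv A (Kr a)" and CaE: "equiv A (Cr a)"
      using Kr_equiv[OF aI] Cr_equiv[OF aI] by (auto simp: A_def)
    have KeE: "equiv A (Kr e)" and CeE: "equiv A (Cr e)"
      using Kr_equiv[OF eI] Cr_equiv[OF eI] by (auto simp: A_def)
    have le: "card (A // Kr a) \<le> n" using card_quot_le[OF finA] cardA by metis
    have "card (A // Kr a) \<noteq> n"
    proof
      assume h: "card (A // Kr a) = n"
      have "Id_on A = Kr a"
        using refine_card(2)[OF finA equiv_Id_on KaE Id_on_sub[OF KaE]] h card_quot_Id[of A] cardA by simp
      moreover have "Id_on A = Cr a"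
        using refine_card(2)[OF finA equiv_Id_on CaE Id_on_sub[OF CaE]] h eqKC card_quot_Id[of A] cardA by simp
      ultimately have "Kr (spow (pmult n) a k) = Id_on A" using spid kk by simp
      then have "Kr e = Id_on A" using pk by (simp add: Q_def)
      then show False using cKe card_quot_Id[of A] cardA n2 by simp
    qed
    then have le2: "card (A // Kr a) \<le> n - 1" using le by simp
    have "Kr a = Kr e" using refine_card(2)[OF finA KaE KeE Kae] le2 cKe by simp
    moreover have "Cr a = Cr e" using refine_card(2)[OF finA CaE CeE Cae] le2 eqKC cCe by simp
    ultimately show "a \<in> Q" using aI by (simp add: Q_def)
  qed
  show ?thesis using sub iso HQ by simp
qed

end
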